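(* For each $n$, let $W^{(n)}\in\{0,1\}^{n\times n}$ be a random adjacency matrix drawn from a latent space model with population matrix $\mathscr{W}^{(n)}=\mathbb{E}(W^{(n)})\in[0,1]^{n\times n}$, and let $L^{(n)}$ and $\mathscr{L}^{(n)}$ be the observed and population normalized graph Laplacians. Let $\tau_n=\min_{i=1,\dots,n}\mathscr{D}^{(n)}_{ii}/n$. If there exists $N>0$ such that $\tau_n^2\log n>2$ for all $n>N$, then \[ \bigl\|L^{(n)}L^{(n)}-\mathscr{L}^{(n)}\mathscr{L}^{(n)}\bigr\|_F=o\Bigl(\frac{\log n}{\tau_n^{2}n^{1/2}}\Bigr)\quad\text{almost surely.} \]
   Context: Latent space model (with the latent vectors $z_1,\dots,z_n$ treated as fixed): $W$ is a symmetric $\{0,1\}$-valued $n\times n$ matrix with $W_{ii}=0$ for all $i$, and the entries $W_{ij}$, $i<j$, are independent Bernoulli random variables with means $\mathscr{W}_{ij}\in[0,1]$; the population matrix is $\mathscr{W}=\mathbb{E}(W)$ (so $\mathscr{W}_{ii}=0$). Observed quantities: $D$ is diagonal with $D_{ii}=\sum_k W_{ik}$ and $L=D^{-1/2}WD^{-1/2}$. Population quantities: $\mathscr{D}$ is diagonal with $\mathscr{D}_{ii}=\sum_k\mathscr{W}_{ik}$ and $\mathscr{L}=\mathscr{D}^{-1/2}\mathscr{W}\mathscr{D}^{-1/2}$. A superscript $(n)$ indicates the objects for the model with $n$ nodes. $\|\cdot\|_F$ is the Frobenius norm. *)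

theory Defs
  imports "HOL-Probability.Probability" "HOL-Library.Landau_Symbols"
begin

text \<open>n x n matrices are represented as functions nat => nat => real,
  with only the entries with indices < n being relevant.\<close>

definition degree_mat :: "nat \<Rightarrow> (nat \<Rightarrow> nat \<Rightarrow> real) \<Rightarrow> nat \<Rightarrow> real" where
  "degree_mat n A i = (\<Sum>k<n. A i k)"

text \<open>Normalized Laplacian D^(-1/2) A D^(-1/2); for zero degree we use the
  Isabelle convention 1 / 0 = 0.\<close>
definition norm_laplacian :: "nat \<Rightarrow> (nat \<Rightarrow> nat \<Rightarrow> real) \<Rightarrow> nat \<Rightarrow> nat \<Rightarrow> real" where
  "norm_laplacian n A i j =
     (1 / sqrt (degree_mat n A i)) * A i j * (1 / sqrt (degree_mat n A j))"

definition mat_mult_n :: "nat \<Rightarrow> (nat \<Rightarrow> nat \<Rightarrow> real) \<Rightarrow> (nat \<Rightarrow> nat \<Rightarrow> real) \<Rightarrow> nat \<Rightarrow> nat \<Rightarrow> real" where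
  "mat_mult_n n A B i j = (\<Sum>k<n. A i k * B k j)"

definition frob_norm :: "nat \<Rightarrow> (nat \<Rightarrow> nat \<Rightarrow> real) \<Rightarrow> real" where
  "frob_norm n A = sqrt (\<Sum>i<n. \<Sum>j<n. (A i j)\<^sup>2)"

definition tau :: "nat \<Rightarrow> (nat \<Rightarrow> nat \<Rightarrow> real) \<Rightarrow> real" where
  "tau n P = (MIN i\<in>{..<n}. degree_mat n P i) / real n"

end

theory Submission
  imports Defs "HOL-Real_Asymp.Real_Asymp"
begin

lemma one_div_sqrt_sq: "(x::real) \<ge> 0 \<Longrightarrow> (1 / sqrt x) * (1 / sqrt x) = 1 / x"
  by (simp add: real_sqrt_mult[symmetric])

lemma degree_nonneg:
  assumes "\<And>i k. i < n \<Longrightarrow> k < n \<Longrightarrow> 0 \<le> A i k" "i < n"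
  shows "0 \<le> degree_mat n A i"
  unfolding degree_mat_def using assms by (auto intro: sum_nonneg)

lemma LL_entry:
  assumes nn: "\<And>i k. i < n \<Longrightarrow> k < n \<Longrightarrow> 0 \<le> A i k"
  shows "mat_mult_n n (norm_laplacian n A) (norm_laplacian n A) i j =
     (1 / sqrt (degree_mat n A i)) * (1 / sqrt (degree_mat n A j)) *
       (\<Sum>k<n. A i k * A k j / degree_mat n A k)"
proof -
  have "mat_mult_n n (norm_laplacian n A) (norm_laplacian n A) i j =
     (\<Sum>k<n. (1 / sqrt (degree_mat n A i)) * (1 / sqrt (degree_mat n A j)) *
       (A i k * A k j / degree_mat n A k))"
    unfolding mat_mult_n_def
  proof (rule sum.cong[OF refl])
    fix k assume "k \<in> {..<n}"
    then have "0 \<le> degree_mat n A k" using degree_nonneg[OF nn] by auto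
    then have e: "(1 / sqrt (degree_mat n A k)) * (1 / sqrt (degree_mat n A k)) = 1 / degree_mat n A k"
      by (rule one_div_sqrt_sq)
    show "norm_laplacian n A i k * norm_laplacian n A k j =
         1 / sqrt (degree_mat n A i) * (1 / sqrt (degree_mat n A j)) *
         (A i k * A k j / degree_mat n A k)"
      unfolding norm_laplacian_def
      using e by (simp add: field_simps)
  qed
  also have "\<dots> = (1 / sqrt (degree_mat n A i)) * (1 / sqrt (degree_mat n A j)) *
       (\<Sum>k<n. A i k * A k j / degree_mat n A k)"
    by (simp add: sum_distrib_left)
  finally show ?thesis .
qed


lemma entry_bound:
  fixes di dj ei ej a a' al c m s t :: real
  assumes m: "m > 0" and ei: "ei \<ge> m" and ej: "ej \<ge> m"
    and si: "\<bar>di - ei\<bar> \<le> s" and sj: "\<bar>dj - ej\<bar> \<le> s" and s0: "0 \<le> s" and sm: "s \<le> m / 2"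
    and t1: "\<bar>a - a'\<bar> \<le> 2 * s / m^2 * c" and c0: "0 \<le> c" and ci: "c \<le> di" and cj: "c \<le> dj"
    and t2: "\<bar>a' - al\<bar> \<le> t" and al0: "0 \<le> al" and ali: "al \<le> ei / m" and alj: "al \<le> ej / m"
  shows "\<bar>1 / sqrt di * (1 / sqrt dj) * a - 1 / sqrt ei * (1 / sqrt ej) * al\<bar> \<le> 7 * s / m^2 + 2 * t / m"
proof -
  have di: "di \<ge> m / 2" using si sm ei by linarith
  have dj: "dj \<ge> m / 2" using sj sm ej by linarith
  have di3: "di \<le> 3/2 * ei" using si sm ei m by linarith
  define x where "x = sqrt (di * dj)"
  define y where "y = sqrt (ei * ej)"
  have dpos: "di > 0" "dj > 0" using di dj m by auto
  have epos: "ei > 0" "ej > 0" using ei ej m by auto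
  have x2: "x^2 = di * dj" unfolding x_def using dpos by simp
  have y2: "y^2 = ei * ej" unfolding y_def using epos by simp
  have xpos: "x > 0" unfolding x_def using dpos by simp
  have ypos: "y > 0" unfolding y_def using epos by simp
  have X: "1 / sqrt di * (1 / sqrt dj) = 1 / x" unfolding x_def by (simp add: real_sqrt_mult)
  have Y: "1 / sqrt ei * (1 / sqrt ej) = 1 / y" unfolding y_def by (simp add: real_sqrt_mult)
  have xm: "x \<ge> m / 2"
  proof -
    have "(m/2)*(m/2) \<le> di * dj" using di dj m
      by (intro mult_mono) auto
    then have "(m/2)^2 \<le> di * dj" by (simp add: power2_eq_square)
    then have "m/2 \<le> sqrt (di * dj)" using m by (metis real_le_rsqrt)
    then show ?thesis unfolding x_def .
  qed
  have cx: "c \<le> x"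
  proof -
    have "c*c \<le> di * dj" using c0 ci cj by (intro mult_mono) auto
    then have "c^2 \<le> di * dj" by (simp add: power2_eq_square)
    then show ?thesis unfolding x_def by (metis real_le_rsqrt)
  qed
  have eq: "1/x * a - 1/y * al = (a - a')/x + (a' - al)/x + al * (1/x - 1/y)"
    using xpos ypos by (simp add: field_simps)
  then have "\<bar>1/x * a - 1/y * al\<bar> \<le> \<bar>a - a'\<bar>/x + \<bar>a' - al\<bar>/x + al * \<bar>1/x - 1/y\<bar>"
  proof -
    have "\<bar>(a - a')/x + (a' - al)/x + al * (1/x - 1/y)\<bar> \<le> \<bar>(a - a')/x\<bar> + \<bar>(a' - al)/x\<bar> + \<bar>al * (1/x - 1/y)\<bar>"
      by linarith
    also have "\<dots> = \<bar>a - a'\<bar>/x + \<bar>a' - al\<bar>/x + al * \<bar>1/x - 1/y\<bar>"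
      using xpos al0 by (simp add: abs_mult abs_divide)
    finally show ?thesis using eq by simp
  qed
  moreover have "\<bar>a - a'\<bar>/x \<le> 2 * s / m^2"
  proof -
    have "\<bar>a - a'\<bar>/x \<le> (2 * s / m^2 * c) / x" using t1 xpos by (intro divide_right_mono) auto
    also have "\<dots> = 2 * s / m^2 * (c / x)" by simp
    also have "\<dots> \<le> 2 * s / m^2 * 1"
      using cx xpos s0 m by (intro mult_left_mono) auto
    finally show ?thesis by simp
  qed
  moreover have "\<bar>a' - al\<bar>/x \<le> 2 * t / m"
  proof -
    have t0: "t \<ge> 0" using t2 by linarith
    have "\<bar>a' - al\<bar>/x \<le> t / x" using t2 xpos by (intro divide_right_mono) auto
    also have "\<dots> \<le> t / (m/2)" using xm t0 m by (intro divide_left_mono) auto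
    also have "\<dots> = 2 * t / m" by simp
    finally show ?thesis .
  qed
  moreover have "al * \<bar>1/x - 1/y\<bar> \<le> 5 * s / m^2"
  proof -
    have e1: "\<bar>1/x - 1/y\<bar> = \<bar>y^2 - x^2\<bar> / ((x + y) * x * y)"
    proof -
      have "1/x - 1/y = (y - x) / (x * y)" using xpos ypos by (simp add: field_simps)
      also have "y - x = (y^2 - x^2) / (x + y)" using xpos ypos by (simp add: field_simps power2_eq_square)
      finally have "1/x - 1/y = (y^2 - x^2) / ((x + y) * x * y)" by (simp add: mult.assoc)
      then show ?thesis using xpos ypos by (simp add: abs_divide)
    qed
    have e2: "\<bar>y^2 - x^2\<bar> \<le> s * (ej + di)"
    proof -
      have "y^2 - x^2 = (ei - di) * ej + di * (ej - dj)" using x2 y2 by (simp add: algebra_simps)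
      then have "\<bar>y^2 - x^2\<bar> \<le> \<bar>ei - di\<bar> * ej + di * \<bar>ej - dj\<bar>"
        using epos dpos abs_triangle_ineq[of "(ei - di) * ej" "di * (ej - dj)"] by (simp add: abs_mult)
      also have "\<dots> \<le> s * ej + di * s"
        using si sj epos dpos by (intro add_mono mult_right_mono mult_left_mono) (auto simp: abs_minus_commute)
      finally show ?thesis by (simp add: algebra_simps)
    qed
    have "al * \<bar>1/x - 1/y\<bar> \<le> al * (s * (ej + di) / ((x + y) * x * y))"
      using e1 e2 al0 xpos ypos by (auto intro!: mult_left_mono divide_right_mono)
    also have "\<dots> \<le> al * (s * (ej + di) / (y * x * y))"
      using al0 s0 epos dpos xpos ypos
      by (intro mult_left_mono divide_left_mono) (auto intro!: mult_right_mono)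
    also have "\<dots> = s / x * ((al * ej + al * di) / y^2)"
      using xpos ypos by (simp add: field_simps power2_eq_square)
    also have "\<dots> \<le> s / x * (5/2 / m)"
    proof (rule mult_left_mono)
      have "al * ej \<le> ei / m * ej" using ali epos by (intro mult_right_mono) auto
      moreover have "al * di \<le> ej / m * (3/2 * ei)"
        using alj di3 al0 dpos by (intro mult_mono) auto
      ultimately have "al * ej + al * di \<le> 5/2 * (ei * ej) / m" by (simp add: field_simps)
      then show "(al * ej + al * di) / y^2 \<le> 5/2 / m"
        using y2 epos m by (simp add: divide_simps)
    qed (use s0 xpos in auto)
    also have "\<dots> \<le> s / (m/2) * (5/2/m)"
      using s0 xm m by (intro mult_right_mono divide_left_mono) auto
    also have "\<dots> = 5 * s / m^2" by (simp add: power2_eq_square)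
    finally show ?thesis .
  qed
  ultimately show ?thesis unfolding X Y by linarith
qed


lemma inv_diff_bound:
  fixes d e m s :: real
  assumes "m > 0" "d \<ge> m/2" "e \<ge> m" "\<bar>d - e\<bar> \<le> s"
  shows "\<bar>1/d - 1/e\<bar> \<le> 2 * s / m^2"
proof -
  have dp: "d > 0" "e > 0" using assms by auto
  have "\<bar>1/d - 1/e\<bar> = \<bar>d - e\<bar> / (d * e)" using dp by (simp add: field_simps abs_divide abs_minus_commute)
  also have "\<dots> \<le> s / (d * e)" using assms dp by (intro divide_right_mono) auto
  also have "\<dots> \<le> s / ((m/2) * m)"
    using assms dp by (intro divide_left_mono mult_mono) (auto simp: abs_le_iff)
  also have "\<dots> = 2 * s / m^2" by (simp add: power2_eq_square)
  finally show ?thesis .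
qed

lemma diag_bound:
  assumes A01: "\<And>i k. i < n \<Longrightarrow> k < n \<Longrightarrow> 0 \<le> A i k \<and> A i k \<le> 1"
    and r: "r > 0" and dr: "\<And>k. k < n \<Longrightarrow> degree_mat n A k \<ge> r" and i: "i < n"
  shows "0 \<le> mat_mult_n n (norm_laplacian n A) (norm_laplacian n A) i i \<and>
         mat_mult_n n (norm_laplacian n A) (norm_laplacian n A) i i \<le> 1 / r"
proof -
  have nn: "\<And>i k. i < n \<Longrightarrow> k < n \<Longrightarrow> 0 \<le> A i k" using A01 by auto
  define d where "d = degree_mat n A i"
  have dpos: "d > 0" using dr[OF i] r unfolding d_def by auto
  have eq: "mat_mult_n n (norm_laplacian n A) (norm_laplacian n A) i i =
       (1 / d) * (\<Sum>k<n. A i k * A k i / degree_mat n A k)"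
  proof -
    have "mat_mult_n n (norm_laplacian n A) (norm_laplacian n A) i i =
       (1 / sqrt d * (1 / sqrt d)) * (\<Sum>k<n. A i k * A k i / degree_mat n A k)"
      using LL_entry[OF nn, where i=i and j=i] by (simp add: d_def)
    also have "1 / sqrt d * (1 / sqrt d) = 1 / d" using dpos by (intro one_div_sqrt_sq) auto
    finally show ?thesis .
  qed
  have s0: "0 \<le> (\<Sum>k<n. A i k * A k i / degree_mat n A k)"
    using nn i degree_nonneg[OF nn] by (intro sum_nonneg divide_nonneg_nonneg mult_nonneg_nonneg) auto
  have "(\<Sum>k<n. A i k * A k i / degree_mat n A k) \<le> (\<Sum>k<n. A i k * (1 / r))"
  proof (rule sum_mono)
    fix k assume k: "k \<in> {..<n}"
    have "A k i / degree_mat n A k \<le> 1 / r"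
      using A01[of k i] dr[of k] k i r by (intro frac_le) auto
    then show "A i k * A k i / degree_mat n A k \<le> A i k * (1 / r)"
      using nn[of i k] k i by (simp add: mult_left_mono times_divide_eq_right[symmetric] del: times_divide_eq_right)
  qed
  also have "\<dots> = d / r" unfolding d_def degree_mat_def by (simp add: sum_divide_distrib)
  finally have "(1/d) * (\<Sum>k<n. A i k * A k i / degree_mat n A k) \<le> (1/d) * (d / r)"
    using dpos by (intro mult_left_mono) auto
  then show ?thesis unfolding eq using dpos s0 by auto
qed


lemma abs_mult_le_helper: "0 \<le> (c::real) \<Longrightarrow> \<bar>f\<bar> \<le> B \<Longrightarrow> \<bar>c * f\<bar> \<le> c * B"
  by (simp add: abs_mult mult_left_mono)

lemma det_bound:
  fixes n :: nat and w p :: "nat \<Rightarrow> nat \<Rightarrow> real" and m s t :: real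
  assumes w01: "\<And>i j. i < n \<Longrightarrow> j < n \<Longrightarrow> 0 \<le> w i j \<and> w i j \<le> 1"
    and wsym: "\<And>i j. i < n \<Longrightarrow> j < n \<Longrightarrow> w i j = w j i"
    and p01: "\<And>i j. i < n \<Longrightarrow> j < n \<Longrightarrow> 0 \<le> p i j \<and> p i j \<le> 1"
    and psym: "\<And>i j. i < n \<Longrightarrow> j < n \<Longrightarrow> p i j = p j i"
    and m: "m > 0" and dm: "\<And>k. k < n \<Longrightarrow> m \<le> degree_mat n p k"
    and s0: "0 \<le> s" and sm: "s \<le> m / 2" and t0: "0 \<le> t"
    and H1: "\<And>i. i < n \<Longrightarrow> \<bar>degree_mat n w i - degree_mat n p i\<bar> \<le> s"
    and H2: "\<And>i j. i < n \<Longrightarrow> j < n \<Longrightarrow> i \<noteq> j \<Longrightarrow>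
       \<bar>(\<Sum>k<n. w i k * w k j / degree_mat n p k) - (\<Sum>k<n. p i k * p k j / degree_mat n p k)\<bar> \<le> t"
  shows "frob_norm n (\<lambda>i j. mat_mult_n n (norm_laplacian n w) (norm_laplacian n w) i j
                          - mat_mult_n n (norm_laplacian n p) (norm_laplacian n p) i j)
         \<le> 2 * sqrt n / m + n * (7 * s / m^2 + 2 * t / m)"
proof -
  define K where "K = 7 * s / m^2 + 2 * t / m"
  define E where "E = (\<lambda>i j. mat_mult_n n (norm_laplacian n w) (norm_laplacian n w) i j
                          - mat_mult_n n (norm_laplacian n p) (norm_laplacian n p) i j)"
  have K0: "K \<ge> 0" unfolding K_def using s0 t0 m by auto
  have wnn: "\<And>i k. i < n \<Longrightarrow> k < n \<Longrightarrow> 0 \<le> w i k" using w01 by auto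
  have pnn: "\<And>i k. i < n \<Longrightarrow> k < n \<Longrightarrow> 0 \<le> p i k" using p01 by auto
  have dw: "degree_mat n w k \<ge> m / 2" if k: "k < n" for k
    using H1[OF k] dm[OF k] sm unfolding abs_le_iff by linarith
  have dwpos: "degree_mat n w k > 0" if k: "k < n" for k using dw[OF k] m by linarith
  have dppos: "degree_mat n p k > 0" if k: "k < n" for k using dm[OF k] m by linarith
  have offdiag: "\<bar>E i j\<bar> \<le> K" if i: "i < n" and j: "j < n" and ij: "i \<noteq> j" for i j
  proof -
    define c where "c = (\<Sum>k<n. w i k * w k j)"
    have c0: "0 \<le> c" unfolding c_def using wnn i j by (intro sum_nonneg mult_nonneg_nonneg) auto
    have ci: "c \<le> degree_mat n w i" unfolding c_def degree_mat_def
    proof (rule sum_mono)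
      fix k assume "k \<in> {..<n}" then show "w i k * w k j \<le> w i k"
        using w01[of i k] w01[of k j] i j by (simp add: mult_left_le)
    qed
    have cj: "c \<le> degree_mat n w j" unfolding c_def degree_mat_def
    proof (rule sum_mono)
      fix k assume k: "k \<in> {..<n}" then show "w i k * w k j \<le> w j k"
        using w01[of i k] w01[of k j] wsym[of k j] i j by (simp add: mult_le_one mult_left_le_one_le)
    qed
    have t1: "\<bar>(\<Sum>k<n. w i k * w k j / degree_mat n w k) - (\<Sum>k<n. w i k * w k j / degree_mat n p k)\<bar>
              \<le> 2 * s / m^2 * c"
    proof -
      have "\<bar>(\<Sum>k<n. w i k * w k j / degree_mat n w k) - (\<Sum>k<n. w i k * w k j / degree_mat n p k)\<bar>
            = \<bar>\<Sum>k<n. w i k * w k j * (1 / degree_mat n w k - 1 / degree_mat n p k)\<bar>"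
        by (simp add: sum_subtractf[symmetric] right_diff_distrib)
      also have "\<dots> \<le> (\<Sum>k<n. \<bar>w i k * w k j * (1 / degree_mat n w k - 1 / degree_mat n p k)\<bar>)"
        by (rule sum_abs)
      also have "\<dots> \<le> (\<Sum>k<n. w i k * w k j * (2 * s / m^2))"
      proof (rule sum_mono)
        fix k assume k: "k \<in> {..<n}"
        have "\<bar>1 / degree_mat n w k - 1 / degree_mat n p k\<bar> \<le> 2 * s / m^2"
          using k m dw dm H1 by (intro inv_diff_bound) auto
        moreover have "0 \<le> w i k * w k j" using wnn i j k by auto
        ultimately show "\<bar>w i k * w k j * (1 / degree_mat n w k - 1 / degree_mat n p k)\<bar>
              \<le> w i k * w k j * (2 * s / m^2)"
          by (rule abs_mult_le_helper[rotated])
      qed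
      also have "\<dots> = 2 * s / m^2 * c" unfolding c_def by (simp add: sum_distrib_left sum_divide_distrib mult.commute)
      finally show ?thesis .
    qed
    define al where "al = (\<Sum>k<n. p i k * p k j / degree_mat n p k)"
    have al0: "0 \<le> al" unfolding al_def using pnn dppos i j
      by (intro sum_nonneg divide_nonneg_nonneg mult_nonneg_nonneg) (auto simp: less_imp_le)
    have ali: "al \<le> degree_mat n p i / m"
    proof -
      have "al \<le> (\<Sum>k<n. p i k * (1 / m))" unfolding al_def
      proof (rule sum_mono)
        fix k assume k: "k \<in> {..<n}"
        have "p k j / degree_mat n p k \<le> 1 / m" using p01[of k j] dm[of k] m k j by (intro frac_le) auto
        then show "p i k * p k j / degree_mat n p k \<le> p i k * (1 / m)"
          using pnn[of i k] k i by (simp add: mult_left_mono times_divide_eq_right[symmetric] del: times_divide_eq_right)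
      qed
      also have "\<dots> = degree_mat n p i / m" unfolding degree_mat_def by (simp add: sum_divide_distrib)
      finally show ?thesis .
    qed
    have alj: "al \<le> degree_mat n p j / m"
    proof -
      have "al \<le> (\<Sum>k<n. p j k * (1 / m))" unfolding al_def
      proof (rule sum_mono)
        fix k assume k: "k \<in> {..<n}"
        have "p i k / degree_mat n p k \<le> 1 / m" using p01[of i k] dm[of k] m k i by (intro frac_le) auto
        then have "p k j * (p i k / degree_mat n p k) \<le> p k j * (1 / m)"
          using pnn[of k j] k j by (intro mult_left_mono) auto
        then show "p i k * p k j / degree_mat n p k \<le> p j k * (1 / m)"
          using psym[of k j] k j by (simp add: mult.commute)
      qed
      also have "\<dots> = degree_mat n p j / m" unfolding degree_mat_def by (simp add: sum_divide_distrib)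
      finally show ?thesis .
    qed
    have "\<bar>1 / sqrt (degree_mat n w i) * (1 / sqrt (degree_mat n w j)) * (\<Sum>k<n. w i k * w k j / degree_mat n w k)
          - 1 / sqrt (degree_mat n p i) * (1 / sqrt (degree_mat n p j)) * al\<bar> \<le> 7 * s / m^2 + 2 * t / m"
      apply (rule entry_bound[where c=c and a'="\<Sum>k<n. w i k * w k j / degree_mat n p k"])
      using m dm[OF i] dm[OF j] H1[OF i] H1[OF j] s0 sm t1 c0 ci cj H2[OF i j ij] al0 ali alj
      by (auto simp: al_def abs_minus_commute)
    moreover have "E i j = 1 / sqrt (degree_mat n w i) * (1 / sqrt (degree_mat n w j)) * (\<Sum>k<n. w i k * w k j / degree_mat n w k)
          - 1 / sqrt (degree_mat n p i) * (1 / sqrt (degree_mat n p j)) * al"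
      unfolding E_def al_def using LL_entry[OF wnn, where i=i and j=j] LL_entry[OF pnn, where i=i and j=j]
      by simp
    ultimately show ?thesis unfolding K_def by simp
  qed
  have diag: "\<bar>E i i\<bar> \<le> 2 / m" if i: "i < n" for i
  proof -
    have a: "0 \<le> mat_mult_n n (norm_laplacian n w) (norm_laplacian n w) i i \<and>
         mat_mult_n n (norm_laplacian n w) (norm_laplacian n w) i i \<le> 1 / (m/2)"
      using w01 m dw i by (intro diag_bound) auto
    have b: "0 \<le> mat_mult_n n (norm_laplacian n p) (norm_laplacian n p) i i \<and>
         mat_mult_n n (norm_laplacian n p) (norm_laplacian n p) i i \<le> 1 / m"
      using p01 m dm i by (intro diag_bound) auto
    have "1 / m \<le> 1 / (m/2)" using m by (intro divide_left_mono) auto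
    then show ?thesis unfolding E_def using a b by (simp add: abs_le_iff)
  qed
  have row: "(\<Sum>j<n. (E i j)^2) \<le> (2/m)^2 + n * K^2" if i: "i < n" for i
  proof -
    have "(\<Sum>j<n. (E i j)^2) \<le> (\<Sum>j<n. (if j = i then (2/m)^2 else 0) + K^2)"
    proof (rule sum_mono)
      fix j assume j: "j \<in> {..<n}"
      show "(E i j)^2 \<le> (if j = i then (2/m)^2 else 0) + K^2"
      proof (cases "j = i")
        case True
        have "(E i j)^2 \<le> (2/m)^2" using diag[OF i] True m
          by (metis abs_ge_zero power2_abs power_mono)
        then have "(E i j)^2 \<le> (2/m)^2 + K^2" by (rule add_increasing2[OF zero_le_power2])
        then show ?thesis using True by simp
      next
        case False
        have "(E i j)^2 \<le> K^2" using offdiag[of i j] i j False K0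
          by (metis abs_ge_zero power2_abs power_mono lessThan_iff)
        then have "(E i j)^2 \<le> 0 + K^2" by simp
        then show ?thesis using False by simp
      qed
    qed
    also have "\<dots> = (2/m)^2 + n * K^2" using i by (simp add: sum.distrib)
    finally show ?thesis .
  qed
  have "(\<Sum>i<n. \<Sum>j<n. (E i j)^2) \<le> (\<Sum>i<n. (2/m)^2 + n * K^2)"
    by (rule sum_mono) (use row in auto)
  also have "\<dots> = n * (2/m)^2 + (n * K)^2" by (simp add: power2_eq_square algebra_simps)
  also have "\<dots> \<le> (2 * sqrt n / m + n * K)^2"
  proof -
    have "(2 * sqrt n / m + n * K)^2 = n * (2/m)^2 + (n * K)^2 + 2 * (2 * sqrt n / m) * (n * K)"
      by (simp add: power2_eq_square algebra_simps)
    moreover have "0 \<le> 2 * (2 * sqrt n / m) * (n * K)" using m K0 by auto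
    ultimately show ?thesis by linarith
  qed
  finally have "sqrt (\<Sum>i<n. \<Sum>j<n. (E i j)^2) \<le> 2 * sqrt n / m + n * K"
    using m K0 by (intro real_le_lsqrt) auto
  then show ?thesis unfolding frob_norm_def E_def K_def .
qed


lemma lim_aux: "(\<lambda>n::nat. (2 + 9 * sqrt (2 * ln (real n))) / ln (real n)) \<longlonglongrightarrow> 0"
  by real_asymp

lemma asym:
  fixes f T :: "nat \<Rightarrow> real"
  assumes ev: "eventually (\<lambda>n. T n > 0 \<and> \<bar>f n\<bar> \<le> (2 + 9 * sqrt (2 * ln (real n))) / ((T n)^2 * sqrt (real n))) sequentially"
  shows "f \<in> o(\<lambda>n. ln (real n) / ((T n)^2 * sqrt (real n)))"
proof (rule landau_o.smallI)
  fix c :: real assume c: "c > 0"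
  have e1: "eventually (\<lambda>n. (2 + 9 * sqrt (2 * ln (real n))) / ln (real n) < c) sequentially"
    using order_tendstoD(2)[OF lim_aux c] .
  have e2: "eventually (\<lambda>n::nat. n \<ge> 3) sequentially" by (rule eventually_ge_at_top)
  show "eventually (\<lambda>n. norm (f n) \<le> c * norm (ln (real n) / ((T n)^2 * sqrt (real n)))) sequentially"
    using ev e1 e2
  proof eventually_elim
    case (elim n)
    have ln0: "ln (real n) > 0" using elim(3) by simp
    have Tp: "T n > 0" using elim(1) by simp
    define C where "C = 2 + 9 * sqrt (2 * ln (real n))"
    define D where "D = (T n)^2 * sqrt (real n)"
    have Dp: "D > 0" unfolding D_def using Tp elim(3) by simp
    have "C < c * ln (real n)" using elim(2) ln0 unfolding C_def by (simp add: divide_less_eq)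
    then have "C / D \<le> c * ln (real n) / D" using Dp by (intro divide_right_mono) auto
    moreover have "\<bar>f n\<bar> \<le> C / D" using elim(1) unfolding C_def D_def by simp
    ultimately show ?case using ln0 Dp unfolding D_def[symmetric] by (simp add: abs_divide)
  qed
qed

lemma B_alg:
  fixes r q T :: real
  assumes "r > 0" "T > 0"
  shows "2 * r / (T * r^2) + r^2 * (7 * (r * q) / (T * r^2)^2 + 2 * ((r * q) / (T * r^2)) / (T * r^2))
         = 2 / (T * r) + 9 * q / (T^2 * r)"
  using assms by (simp add: field_simps power2_eq_square)

lemma B_bound:
  fixes T :: real and n :: nat
  assumes T: "T > 0" "T \<le> 1" and n: "n \<ge> 1"
  defines "m \<equiv> T * real n"
  defines "s \<equiv> sqrt (2 * real n * ln (real n))"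
  shows "2 * sqrt n / m + n * (7 * s / m^2 + 2 * (s / m) / m)
         \<le> (2 + 9 * sqrt (2 * ln (real n))) / (T^2 * sqrt (real n))"
proof -
  define r where "r = sqrt (real n)"
  have rp: "r > 0" unfolding r_def using n by simp
  have nr: "real n = r^2" unfolding r_def by simp
  have ln0: "ln (real n) \<ge> 0" using n by (intro ln_ge_zero) simp
  define q where "q = sqrt (2 * ln (real n))"
  have s_eq: "s = r * q"
    unfolding s_def r_def q_def using ln0 by (simp add: real_sqrt_mult[symmetric] mult.commute mult.left_commute)
  have q0: "q \<ge> 0" unfolding q_def using ln0 by simp
  have eq: "2 * sqrt n / m + n * (7 * s / m^2 + 2 * (s / m) / m) = 2 / (T * r) + 9 * q / (T^2 * r)"
  proof -
    have sr: "sqrt (r^2) = r" using rp by simp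
    show ?thesis using B_alg[OF rp T(1), of q] unfolding m_def s_eq r_def[symmetric] nr sr .
  qed
  have "2 / (T * r) \<le> 2 / (T^2 * r)"
  proof -
    have "T^2 * r \<le> T * r" using T rp by (simp add: power2_eq_square mult_left_le_one_le mult_right_mono)
    then show ?thesis using T rp by (intro divide_left_mono) auto
  qed
  then have "2 * sqrt n / m + n * (7 * s / m^2 + 2 * (s / m) / m) \<le> 2 / (T^2 * r) + 9 * q / (T^2 * r)"
    unfolding eq by simp
  also have "\<dots> = (2 + 9 * q) / (T^2 * r)" by (simp add: add_divide_distrib)
  finally show ?thesis unfolding q_def r_def .
qed


lemma ev_ln: "eventually (\<lambda>n::nat. 4 * (ln (real n))^2 \<le> real n) sequentially"
proof -
  have "(\<lambda>n::nat. 4 * (ln (real n))^2 / real n) \<longlonglongrightarrow> 0" by real_asymp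
  then have "eventually (\<lambda>n::nat. 4 * (ln (real n))^2 / real n < 1) sequentially"
    by (rule order_tendstoD) simp
  moreover have "eventually (\<lambda>n::nat. n \<ge> 1) sequentially" by (rule eventually_ge_at_top)
  ultimately show ?thesis
  proof eventually_elim
    case (elim n) then show ?case by (simp add: divide_less_eq)
  qed
qed

lemma s_le:
  fixes T :: real and n :: nat
  assumes n: "n \<ge> 2" and T: "T > 0" and Tl: "T^2 * ln (real n) > 2" and l: "4 * (ln (real n))^2 \<le> real n"
  shows "sqrt (2 * real n * ln (real n)) \<le> T * real n / 2"
proof -
  have ln0: "ln (real n) > 0" using n by simp
  have "8 * ln (real n) * ln (real n) \<le> 2 * real n" using l by (simp add: power2_eq_square)
  also have "\<dots> \<le> T^2 * ln (real n) * real n" using Tl n by (intro mult_right_mono) auto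
  finally have "8 * ln (real n) \<le> T^2 * real n" using ln0 by (simp add: mult.commute mult.left_commute)
  then have "8 * ln (real n) * real n \<le> T^2 * real n * real n" using n by (intro mult_right_mono) auto
  then have "2 * real n * ln (real n) \<le> (T * real n / 2)^2" by (simp add: power2_eq_square field_simps)
  then show ?thesis using T n by (intro real_le_lsqrt) auto
qed

lemma exp4:
  fixes n :: nat and x :: real
  assumes n: "n \<ge> 1" and x: "4 * ln (real n) \<le> x"
  shows "exp (- x) \<le> 1 / real n ^ 4"
proof -
  have "exp (- x) \<le> exp (- (4 * ln (real n)))" using x by simp
  also have "exp (4 * ln (real n)) = real n ^ 4"
    using exp_of_nat_mult[of 4 "ln (real n)"] n by simp
  then have "exp (- (4 * ln (real n))) = 1 / real n ^ 4" by (simp add: exp_minus field_simps)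
  finally show ?thesis .
qed


lemma (in prob_space) indep_vars_cong_space:
  assumes ind: "indep_vars M' X I" and eq: "\<And>i \<omega>. i \<in> I \<Longrightarrow> \<omega> \<in> space M \<Longrightarrow> X i \<omega> = Y i \<omega>"
  shows "indep_vars M' Y I"
proof -
  have pre: "X i -` A \<inter> space M = Y i -` A \<inter> space M" if "i \<in> I" for i A
    using eq[OF that] by auto
  have sets_eq: "{X i -` A \<inter> space M | A. A \<in> sets (M' i)} = {Y i -` A \<inter> space M | A. A \<in> sets (M' i)}"
    if "i \<in> I" for i using pre[OF that] by simp
  have meas: "X i \<in> measurable M (M' i) \<longleftrightarrow> Y i \<in> measurable M (M' i)" if "i \<in> I" for i
    using eq[OF that] by (intro measurable_cong) auto
  show ?thesis using ind unfolding indep_vars_def2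
    using meas sets_eq indep_sets_cong[of I I "\<lambda>i. {X i -` A \<inter> space M | A. A \<in> sets (M' i)}"
      "\<lambda>i. {Y i -` A \<inter> space M | A. A \<in> sets (M' i)}"] by auto
qed

lemma (in prob_space) indep_vars_group:
  fixes X :: "'e \<Rightarrow> 'a \<Rightarrow> real" and g :: "'k \<Rightarrow> 'e set"
  assumes ind: "indep_vars (\<lambda>_. borel) X E"
    and sub: "\<And>k. k \<in> K \<Longrightarrow> g k \<subseteq> E" and disj: "disjoint_family_on g K"
    and h: "\<And>k. k \<in> K \<Longrightarrow> h k \<in> borel_measurable (PiM (g k) (\<lambda>_. borel))"
    and Y: "\<And>k \<omega>. k \<in> K \<Longrightarrow> \<omega> \<in> space M \<Longrightarrow> Y k \<omega> = h k (restrict (\<lambda>e. X e \<omega>) (g k))"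
  shows "indep_vars (\<lambda>_. borel) Y K"
proof -
  have "indep_vars (\<lambda>k. PiM (g k) (\<lambda>_. borel)) (\<lambda>k \<omega>. restrict (\<lambda>e. X e \<omega>) (g k)) K"
    by (rule indep_vars_restrict[OF ind sub disj])
  then have "indep_vars (\<lambda>_. borel) (\<lambda>k \<omega>. h k (restrict (\<lambda>e. X e \<omega>) (g k))) K"
    by (rule indep_vars_compose2) (rule h)
  then show ?thesis by (rule indep_vars_cong_space) (simp add: Y)
qed


definition edge :: "nat \<Rightarrow> nat \<Rightarrow> nat \<times> nat" where
  "edge a b = (min a b, max a b)"

lemma edge_eq: "edge a b = edge c d \<Longrightarrow> (a = c \<and> b = d) \<or> (a = d \<and> b = c)"
  unfolding edge_def by (auto simp: min_def max_def split: if_splits)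

locale lsm = prob_space M for M :: "'a measure" +
  fixes W :: "nat \<Rightarrow> 'a \<Rightarrow> nat \<Rightarrow> nat \<Rightarrow> real" and P :: "nat \<Rightarrow> nat \<Rightarrow> nat \<Rightarrow> real"
  assumes P_range: "\<And>n i j. i < n \<Longrightarrow> j < n \<Longrightarrow> 0 \<le> P n i j \<and> P n i j \<le> 1"
    and P_sym: "\<And>n i j. i < n \<Longrightarrow> j < n \<Longrightarrow> P n i j = P n j i"
    and P_diag: "\<And>n i. i < n \<Longrightarrow> P n i i = 0"
    and W_01: "\<And>n i j \<omega>. \<omega> \<in> space M \<Longrightarrow> i < n \<Longrightarrow> j < n \<Longrightarrow> W n \<omega> i j \<in> {0, 1}"
    and W_sym: "\<And>n i j \<omega>. \<omega> \<in> space M \<Longrightarrow> i < n \<Longrightarrow> j < n \<Longrightarrow> W n \<omega> i j = W n \<omega> j i"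
    and W_diag: "\<And>n i \<omega>. \<omega> \<in> space M \<Longrightarrow> i < n \<Longrightarrow> W n \<omega> i i = 0"
    and W_indep: "\<And>n. indep_vars (\<lambda>_. borel) (\<lambda>(i, j) \<omega>. W n \<omega> i j) {(i, j). i < j \<and> j < n}"
    and W_mean: "\<And>n i j. i < j \<Longrightarrow> j < n \<Longrightarrow> expectation (\<lambda>\<omega>. W n \<omega> i j) = P n i j"
begin

abbreviation X where "X n \<equiv> (\<lambda>(i, j) \<omega>. W n \<omega> i j)"
abbreviation En where "En n \<equiv> {(i, j). i < j \<and> j < (n::nat)}"

lemma edge_in: "a < n \<Longrightarrow> b < n \<Longrightarrow> a \<noteq> b \<Longrightarrow> edge a b \<in> En n"
  unfolding edge_def by (auto simp: min_def max_def)

lemma W_edge: assumes "\<omega> \<in> space M" "a < n" "b < n" shows "W n \<omega> a b = X n (edge a b) \<omega>"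
proof (cases "a \<le> b")
  case True then show ?thesis unfolding edge_def by (simp add: min_def max_def)
next
  case False then show ?thesis unfolding edge_def using W_sym[OF assms] by (simp add: min_def max_def)
qed

lemma rv_X: assumes "e \<in> En n" shows "random_variable borel (X n e)"
proof -
  have "\<forall>i\<in>En n. random_variable borel (X n i)"
    using W_indep[of n] unfolding indep_vars_def2 by (rule conjunct1)
  then show ?thesis using assms by (rule bspec)
qed

lemma rv_W: assumes "a < n" "b < n" shows "random_variable borel (\<lambda>\<omega>. W n \<omega> a b)"
proof (cases "a = b")
  case True
  have m0: "(\<lambda>\<omega>. 0::real) \<in> borel_measurable M" by simp
  have eq: "\<And>\<omega>. \<omega> \<in> space M \<Longrightarrow> W n \<omega> a b = 0" using True W_diag[of _ b n] assms by simp
  have "(\<lambda>\<omega>. W n \<omega> a b) \<in> borel_measurable M \<longleftrightarrow> (\<lambda>_. 0::real) \<in> borel_measurable M"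
    by (rule measurable_cong) (rule eq)
  then show ?thesis using m0 by (rule iffD2)
next
  case False
  have m0: "random_variable borel (X n (edge a b))" by (rule rv_X[OF edge_in[OF assms False]])
  have eq: "\<And>\<omega>. \<omega> \<in> space M \<Longrightarrow> W n \<omega> a b = X n (edge a b) \<omega>" using W_edge assms by blast
  have "(\<lambda>\<omega>. W n \<omega> a b) \<in> borel_measurable M \<longleftrightarrow> X n (edge a b) \<in> borel_measurable M"
    by (rule measurable_cong) (rule eq)
  then show ?thesis using m0 by (rule iffD2)
qed

lemma W_bound: "\<omega> \<in> space M \<Longrightarrow> a < n \<Longrightarrow> b < n \<Longrightarrow> 0 \<le> W n \<omega> a b \<and> W n \<omega> a b \<le> 1"
  using W_01[of \<omega> a n b] by auto

lemma int_W: assumes "a < n" "b < n" shows "integrable M (\<lambda>\<omega>. W n \<omega> a b)"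
  using W_bound assms by (intro integrable_const_bound[where B=1] rv_W) auto

lemma E_W: assumes "a < n" "b < n" shows "expectation (\<lambda>\<omega>. W n \<omega> a b) = P n a b"
proof -
  consider "a = b" | "a < b" | "b < a" by linarith
  then show ?thesis
  proof cases
    case 1
    have "expectation (\<lambda>\<omega>. W n \<omega> a b) = expectation (\<lambda>\<omega>. 0)"
      by (rule Bochner_Integration.integral_cong[OF refl]) (use W_diag assms 1 in auto)
    then show ?thesis using 1 P_diag[of b n] assms by simp
  next
    case 2 then show ?thesis using W_mean[of a b n] assms by simp
  next
    case 3
    have "expectation (\<lambda>\<omega>. W n \<omega> a b) = expectation (\<lambda>\<omega>. W n \<omega> b a)"
      by (rule Bochner_Integration.integral_cong[OF refl]) (use assms in \<open>auto intro: W_sym\<close>)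
    then show ?thesis using W_mean[of b a n] P_sym[of a n b] 3 assms by simp
  qed
qed

lemma E_WW:
  assumes "i < n" "j < n" "k < n" "i \<noteq> j" "k \<noteq> i" "k \<noteq> j"
  shows "expectation (\<lambda>\<omega>. W n \<omega> i k * W n \<omega> k j) = P n i k * P n k j"
proof -
  define e1 where "e1 = edge i k"
  define e2 where "e2 = edge k j"
  have ne: "e1 \<noteq> e2" unfolding e1_def e2_def using edge_eq assms by blast
  have e1E: "e1 \<in> En n" unfolding e1_def using edge_in assms by auto
  have e2E: "e2 \<in> En n" unfolding e2_def using edge_in assms by auto
  have ind: "indep_vars (\<lambda>_. borel) (X n) {e1, e2}"
    using indep_vars_subset[OF W_indep[of n]] e1E e2E by auto
  have intX: "integrable M (X n e)" if "e \<in> {e1, e2}" for e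
  proof -
    have "e \<in> En n" using that e1E e2E by auto
    then obtain a b where ab: "e = (a, b)" "a < b" "b < n" by auto
    show ?thesis using int_W[of a n b] ab by simp
  qed
  have "expectation (\<lambda>\<omega>. W n \<omega> i k * W n \<omega> k j) = expectation (\<lambda>\<omega>. \<Prod>e\<in>{e1, e2}. X n e \<omega>)"
  proof (rule Bochner_Integration.integral_cong[OF refl])
    fix \<omega> assume w: "\<omega> \<in> space M"
    have "(\<Prod>e\<in>{e1, e2}. X n e \<omega>) = X n e1 \<omega> * X n e2 \<omega>" using ne by simp
    also have "\<dots> = W n \<omega> i k * W n \<omega> k j"
      unfolding e1_def e2_def using W_edge[OF w, of i n k] W_edge[OF w, of k n j] assms by simp
    finally show "W n \<omega> i k * W n \<omega> k j = (\<Prod>e\<in>{e1, e2}. X n e \<omega>)" by simp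
  qed
  also have "\<dots> = (\<Prod>e\<in>{e1, e2}. expectation (X n e))"
    by (rule indep_vars_lebesgue_integral[OF _ ind intX]) auto
  also have "\<dots> = expectation (X n e1) * expectation (X n e2)" using ne by simp
  also have "expectation (X n e1) = expectation (\<lambda>\<omega>. W n \<omega> i k)"
    by (rule Bochner_Integration.integral_cong[OF refl]) (use W_edge[of _ i n k] assms in \<open>auto simp: e1_def\<close>)
  also have "expectation (X n e2) = expectation (\<lambda>\<omega>. W n \<omega> k j)"
    by (rule Bochner_Integration.integral_cong[OF refl]) (use W_edge[of _ k n j] assms in \<open>auto simp: e2_def\<close>)
  finally show ?thesis using E_W assms by simp
qed


lemma deg_hoeff:
  assumes n: "n \<ge> 2" and i: "i < n" and s: "s \<ge> 0"
  shows "prob {\<omega> \<in> space M. s \<le> \<bar>degree_mat n (W n \<omega>) i - degree_mat n (P n) i\<bar>}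
         \<le> 2 * exp (-2 * s^2 / (real n - 1))"
proof -
  define K where "K = {..<n} - {i}"
  define Y where "Y = (\<lambda>k \<omega>. W n \<omega> i k)"
  have finK: "finite K" unfolding K_def by simp
  have cardK: "card K = n - 1" unfolding K_def using i by (simp add: card_Diff_singleton)
  have indY: "indep_vars (\<lambda>_. borel) Y K"
  proof (rule indep_vars_group[OF W_indep[of n], where g="\<lambda>k. {edge i k}" and h="\<lambda>k f. f (edge i k)"])
    show "{edge i k} \<subseteq> En n" if "k \<in> K" for k using edge_in[of i n k] that i by (auto simp: K_def)
    show "disjoint_family_on (\<lambda>k. {edge i k}) K"
      unfolding disjoint_family_on_def K_def using edge_eq by fastforce
    show "(\<lambda>f. f (edge i k)) \<in> borel_measurable (PiM {edge i k} (\<lambda>_. borel))" if "k \<in> K" for k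
      by (rule measurable_component_singleton) simp
    show "Y k \<omega> = (\<lambda>f. f (edge i k)) (restrict (\<lambda>e. X n e \<omega>) {edge i k})"
      if "k \<in> K" "\<omega> \<in> space M" for k \<omega>
      using W_edge[of \<omega> i n k] that i by (simp add: Y_def K_def)
  qed
  interpret H: Hoeffding_ineq M K Y "\<lambda>_. 0" "\<lambda>_. 1" "\<Sum>k\<in>K. expectation (Y k)"
  proof unfold_locales
    show "AE x in M. Y k x \<in> {0..1}" if "k \<in> K" for k
      using W_bound[of _ i n k] that i by (auto simp: Y_def K_def)
  qed (use finK indY in auto)
  have S: "(\<Sum>k\<in>K. (1 - 0)^2) = real n - 1" using cardK n by simp
  have "prob {\<omega> \<in> space M. \<bar>(\<Sum>k\<in>K. Y k \<omega>) - (\<Sum>k\<in>K. expectation (Y k))\<bar> \<ge> s}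
        \<le> 2 * exp (-2 * s^2 / (\<Sum>k\<in>K. (1 - 0)^2))"
    by (rule H.Hoeffding_ineq_abs_ge[OF s]) (use S n in simp)
  also have "\<dots> = 2 * exp (-2 * s^2 / (real n - 1))" unfolding S ..
  also have "{\<omega> \<in> space M. \<bar>(\<Sum>k\<in>K. Y k \<omega>) - (\<Sum>k\<in>K. expectation (Y k))\<bar> \<ge> s}
     = {\<omega> \<in> space M. s \<le> \<bar>degree_mat n (W n \<omega>) i - degree_mat n (P n) i\<bar>}"
  proof -
    have mu: "(\<Sum>k\<in>K. expectation (Y k)) = degree_mat n (P n) i"
    proof -
      have "(\<Sum>k\<in>K. expectation (Y k)) = (\<Sum>k\<in>K. P n i k)"
        using E_W i by (auto simp: Y_def K_def intro!: sum.cong)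
      also have "\<dots> = (\<Sum>k<n. P n i k)"
        unfolding K_def using P_diag[OF i] i by (intro sum.mono_neutral_left) auto
      finally show ?thesis unfolding degree_mat_def .
    qed
    have dg: "(\<Sum>k\<in>K. Y k \<omega>) = degree_mat n (W n \<omega>) i" if "\<omega> \<in> space M" for \<omega>
    proof -
      have "(\<Sum>k\<in>K. Y k \<omega>) = (\<Sum>k<n. W n \<omega> i k)"
        unfolding K_def Y_def using W_diag[OF that i] i by (intro sum.mono_neutral_left) auto
      then show ?thesis unfolding degree_mat_def .
    qed
    show ?thesis using mu dg by auto
  qed
  finally show ?thesis .
qed

lemma prod_hoeff:
  assumes n: "n \<ge> 3" and i: "i < n" and j: "j < n" and ij: "i \<noteq> j" and m: "m > 0"
    and dm: "\<And>k. k < n \<Longrightarrow> m \<le> degree_mat n (P n) k" and t: "t \<ge> 0"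
  shows "prob {\<omega> \<in> space M. t \<le> \<bar>(\<Sum>k<n. W n \<omega> i k * W n \<omega> k j / degree_mat n (P n) k)
                                 - (\<Sum>k<n. P n i k * P n k j / degree_mat n (P n) k)\<bar>}
         \<le> 2 * exp (-2 * t^2 * m^2 / real n)"
proof -
  define \<delta> where "\<delta> = degree_mat n (P n)"
  define K where "K = {..<n} - {i, j}"
  define Y where "Y = (\<lambda>k \<omega>. W n \<omega> i k * W n \<omega> k j / \<delta> k)"
  have finK: "finite K" unfolding K_def by simp
  have cardK: "card K = n - 2" unfolding K_def using i j ij by (subst card_Diff_subset) auto
  have Kne: "K \<noteq> {}" using cardK n by auto
  have dpos: "\<delta> k > 0" if "k < n" for k using dm[OF that] m unfolding \<delta>_def by linarith
  have indY: "indep_vars (\<lambda>_. borel) Y K"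
  proof (rule indep_vars_group[OF W_indep[of n], where g="\<lambda>k. {edge i k, edge k j}"
        and h="\<lambda>k f. f (edge i k) * f (edge k j) / \<delta> k"])
    show "{edge i k, edge k j} \<subseteq> En n" if "k \<in> K" for k
      using edge_in[of i n k] edge_in[of k n j] that i j by (auto simp: K_def)
    show "disjoint_family_on (\<lambda>k. {edge i k, edge k j}) K"
      unfolding disjoint_family_on_def K_def using edge_eq ij by fastforce
    show "(\<lambda>f. f (edge i k) * f (edge k j) / \<delta> k) \<in> borel_measurable (PiM {edge i k, edge k j} (\<lambda>_. borel))"
      if "k \<in> K" for k
      by (intro borel_measurable_divide borel_measurable_times measurable_component_singleton
          measurable_const) auto
    show "Y k \<omega> = (\<lambda>f. f (edge i k) * f (edge k j) / \<delta> k) (restrict (\<lambda>e. X n e \<omega>) {edge i k, edge k j})"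
      if "k \<in> K" "\<omega> \<in> space M" for k \<omega>
      using W_edge[of \<omega> i n k] W_edge[of \<omega> k n j] that i j by (simp add: Y_def K_def)
  qed
  interpret H: Hoeffding_ineq M K Y "\<lambda>_. 0" "\<lambda>k. 1 / \<delta> k" "\<Sum>k\<in>K. expectation (Y k)"
  proof unfold_locales
    show "AE x in M. Y k x \<in> {0..1 / \<delta> k}" if "k \<in> K" for k
    proof (rule AE_I2)
      fix x assume x: "x \<in> space M"
      have k: "k < n" using that by (auto simp: K_def)
      have a: "0 \<le> W n x i k \<and> W n x i k \<le> 1" using W_bound[OF x i k] .
      have b: "0 \<le> W n x k j \<and> W n x k j \<le> 1" using W_bound[OF x k j] .
      have "0 \<le> W n x i k * W n x k j" using a b by simp
      moreover have "W n x i k * W n x k j \<le> 1" using a b by (simp add: mult_le_one)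
      ultimately show "Y k x \<in> {0..1 / \<delta> k}" using dpos[OF k] unfolding Y_def
        by (auto intro: divide_right_mono)
    qed
  qed (use finK indY in auto)
  define S where "S = (\<Sum>k\<in>K. (1 / \<delta> k - 0)^2)"
  have Spos: "S > 0" unfolding S_def
  proof (rule sum_pos[OF finK Kne])
    fix k assume "k \<in> K" then have k: "k < n" by (auto simp: K_def)
    show "0 < (1 / \<delta> k - 0)^2" using dpos[OF k] by simp
  qed
  have Sle: "S \<le> real n / m^2"
  proof -
    have "S \<le> (\<Sum>k\<in>K. (1 / m)^2)" unfolding S_def
    proof (rule sum_mono)
      fix k assume "k \<in> K" then have k: "k < n" by (auto simp: K_def)
      have "1 / \<delta> k \<le> 1 / m" using dm[OF k] m unfolding \<delta>_def by (intro divide_left_mono) auto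
      then show "(1 / \<delta> k - 0)^2 \<le> (1 / m)^2" using dpos[OF k] by (simp add: power_mono)
    qed
    also have "\<dots> = card K * (1/m)^2" by simp
    also have "\<dots> \<le> n * (1/m)^2" using cardK by (intro mult_right_mono) auto
    finally show ?thesis by (simp add: power_divide)
  qed
  have "prob {\<omega> \<in> space M. \<bar>(\<Sum>k\<in>K. Y k \<omega>) - (\<Sum>k\<in>K. expectation (Y k))\<bar> \<ge> t}
        \<le> 2 * exp (-2 * t^2 / S)"
    unfolding S_def by (rule H.Hoeffding_ineq_abs_ge[OF t]) (use Spos in \<open>simp add: S_def\<close>)
  also have "\<dots> \<le> 2 * exp (-2 * t^2 * m^2 / real n)"
  proof -
    have "t^2 / (real n / m^2) \<le> t^2 / S" using Spos Sle n m by (intro divide_left_mono) auto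
    then have "t^2 * m^2 / real n \<le> t^2 / S" using m by (simp add: field_simps)
    then show ?thesis by simp
  qed
  also have "{\<omega> \<in> space M. \<bar>(\<Sum>k\<in>K. Y k \<omega>) - (\<Sum>k\<in>K. expectation (Y k))\<bar> \<ge> t}
     = {\<omega> \<in> space M. t \<le> \<bar>(\<Sum>k<n. W n \<omega> i k * W n \<omega> k j / degree_mat n (P n) k)
                                 - (\<Sum>k<n. P n i k * P n k j / degree_mat n (P n) k)\<bar>}"
  proof -
    have mu: "(\<Sum>k\<in>K. expectation (Y k)) = (\<Sum>k<n. P n i k * P n k j / degree_mat n (P n) k)"
    proof -
      have "(\<Sum>k\<in>K. expectation (Y k)) = (\<Sum>k\<in>K. P n i k * P n k j / \<delta> k)"
      proof (rule sum.cong[OF refl])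
        fix k assume "k \<in> K" then have k: "k < n" "k \<noteq> i" "k \<noteq> j" by (auto simp: K_def)
        show "expectation (Y k) = P n i k * P n k j / \<delta> k"
          unfolding Y_def using E_WW[OF i j k(1) ij k(2) k(3)] by simp
      qed
      also have "\<dots> = (\<Sum>k<n. P n i k * P n k j / \<delta> k)"
        unfolding K_def using P_diag[OF i] P_diag[OF j] i j by (intro sum.mono_neutral_left) auto
      finally show ?thesis unfolding \<delta>_def .
    qed
    have dg: "(\<Sum>k\<in>K. Y k \<omega>) = (\<Sum>k<n. W n \<omega> i k * W n \<omega> k j / degree_mat n (P n) k)"
      if "\<omega> \<in> space M" for \<omega>
      unfolding K_def Y_def \<delta>_def using W_diag[OF that i] W_diag[OF that j] i j
      by (intro sum.mono_neutral_left) auto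
    show ?thesis using mu dg by auto
  qed
  finally show ?thesis .
qed

end


lemma (in lsm) main:
  assumes tau_cond: "\<exists>N>0. \<forall>n>N. (tau n (P n))\<^sup>2 * ln (real n) > 2"
  shows "AE \<omega> in M.
           (\<lambda>n. frob_norm n (\<lambda>i j.
                  mat_mult_n n (norm_laplacian n (W n \<omega>)) (norm_laplacian n (W n \<omega>)) i j
                - mat_mult_n n (norm_laplacian n (P n)) (norm_laplacian n (P n)) i j))
         \<in> o(\<lambda>n. ln (real n) / ((tau n (P n))\<^sup>2 * sqrt (real n)))"
proof -
  obtain N where N: "\<forall>n>N. (tau n (P n))\<^sup>2 * ln (real n) > 2" using tau_cond by auto
  define T where "T n = tau n (P n)" for n
  define N0 where "N0 = max N 3 + 1"
  define sn where "sn n = sqrt (2 * real n * ln (real n))" for n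
  define tn where "tn n = sn n / (T n * real n)" for n
  define Pairs where "Pairs n = {(i, j). i < n \<and> j < n \<and> i \<noteq> j}" for n :: nat
  define Dset where "Dset n i = {\<omega> \<in> space M. sn n \<le> \<bar>degree_mat n (W n \<omega>) i - degree_mat n (P n) i\<bar>}" for n i
  define Pset where "Pset n ij = {\<omega> \<in> space M. tn n \<le> \<bar>(\<Sum>k<n. W n \<omega> (fst ij) k * W n \<omega> k (snd ij) / degree_mat n (P n) k)
                                 - (\<Sum>k<n. P n (fst ij) k * P n k (snd ij) / degree_mat n (P n) k)\<bar>}" for n ij
  define A where "A n = (if n < N0 then {} else (\<Union>i\<in>{..<n}. Dset n i) \<union> (\<Union>ij\<in>Pairs n. Pset n ij))" for n
  have finP: "finite (Pairs n)" for n
    by (rule finite_subset[of _ "{..<n} \<times> {..<n}"]) (auto simp: Pairs_def)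
  have cardP: "card (Pairs n) \<le> n * n" for n
  proof -
    have "card (Pairs n) \<le> card ({..<n} \<times> {..<n})"
      by (rule card_mono) (auto simp: Pairs_def)
    then show ?thesis by (simp add: card_cartesian_product)
  qed
  have Pnn: "\<And>n i k. i < n \<Longrightarrow> k < n \<Longrightarrow> 0 \<le> P n i k" using P_range by auto
  have Tprops: "T n > 0 \<and> T n \<le> 1 \<and> (\<forall>k<n. T n * real n \<le> degree_mat n (P n) k) \<and> (T n)^2 * ln (real n) > 2"
    if nN: "n \<ge> N0" for n
  proof -
    have n: "n > N" "n \<ge> 4" using nN by (auto simp: N0_def)
    have fin: "finite (degree_mat n (P n) ` {..<n})" by simp
    have ne: "degree_mat n (P n) ` {..<n} \<noteq> {}" using n by auto
    have Tn: "T n * real n = Min (degree_mat n (P n) ` {..<n})" unfolding T_def tau_def using n by simp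
    have le: "\<forall>k<n. T n * real n \<le> degree_mat n (P n) k" unfolding Tn using fin by (auto intro: Min_le)
    obtain k0 where k0: "k0 < n" "T n * real n = degree_mat n (P n) k0"
      using Min_in[OF fin ne] unfolding Tn[symmetric] by auto
    have "0 \<le> degree_mat n (P n) k0" by (rule degree_nonneg[of n "P n" k0]) (use Pnn k0 in auto)
    then have "0 \<le> T n * real n" using k0 by simp
    moreover have "real n > 0" using n by simp
    ultimately have T0: "T n \<ge> 0" by (simp add: zero_le_mult_iff)
    have "degree_mat n (P n) k0 \<le> (\<Sum>k<n. 1)" unfolding degree_mat_def
      using P_range k0 by (intro sum_mono) auto
    then have "T n * real n \<le> 1 * real n" using k0 by simp
    then have T1: "T n \<le> 1" using n by (simp add: mult_le_cancel_right)
    have Tl: "(T n)^2 * ln (real n) > 2" using N n unfolding T_def by auto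
    then have "T n \<noteq> 0" by auto
    then show ?thesis using T0 T1 le Tl by auto
  qed
  have mDeg: "(\<lambda>\<omega>. \<bar>degree_mat n (W n \<omega>) i - degree_mat n (P n) i\<bar>) \<in> borel_measurable M" if "i < n" for n i
    unfolding degree_mat_def using that
    by (intro borel_measurable_abs borel_measurable_diff borel_measurable_sum rv_W borel_measurable_const) auto
  have mPr: "(\<lambda>\<omega>. \<bar>(\<Sum>k<n. W n \<omega> i k * W n \<omega> k j / degree_mat n (P n) k)
                 - (\<Sum>k<n. P n i k * P n k j / degree_mat n (P n) k)\<bar>) \<in> borel_measurable M"
    if "i < n" "j < n" for n i j
    using that
    by (intro borel_measurable_abs borel_measurable_diff borel_measurable_sum borel_measurable_divide
        borel_measurable_times rv_W borel_measurable_const) auto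
  have setge: "{\<omega> \<in> space M. c \<le> f \<omega>} \<in> sets M" if "f \<in> borel_measurable M" for f :: "'a \<Rightarrow> real" and c
    using that by measurable
  have Dsets: "Dset n i \<in> sets M" if "i < n" for n i
    unfolding Dset_def by (rule setge[OF mDeg[OF that]])
  have Psets: "Pset n ij \<in> sets M" if "ij \<in> Pairs n" for n ij
  proof -
    obtain i j where ij0: "ij = (i, j)" by (cases ij)
    then have ij: "ij = (i, j)" "i < n" "j < n" using that by (auto simp: Pairs_def)
    show ?thesis unfolding Pset_def ij(1) fst_conv snd_conv by (rule setge[OF mPr[OF ij(2,3)]])
  qed
  have Asets: "A n \<in> sets M" for n
    unfolding A_def using Dsets Psets finP by auto
  have Abound: "measure M (A n) \<le> 4 / real n ^ 2" if nN: "n \<ge> N0" for n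
  proof -
    have n: "n \<ge> 4" using nN by (auto simp: N0_def)
    note TP = Tprops[OF nN]
    have ln0: "ln (real n) \<ge> 0" using n by simp
    have sn0: "sn n \<ge> 0" unfolding sn_def using ln0 by simp
    have D: "measure M (Dset n i) \<le> 2 / real n ^ 4" if i: "i < n" for i
    proof -
      have "measure M (Dset n i) \<le> 2 * exp (-2 * (sn n)^2 / (real n - 1))"
        unfolding Dset_def by (rule deg_hoeff) (use n i sn0 in auto)
      also have "exp (-2 * (sn n)^2 / (real n - 1)) \<le> 1 / real n ^ 4"
      proof -
        have "(sn n)^2 = 2 * real n * ln (real n)" unfolding sn_def using ln0 by simp
        then have e: "2 * (sn n)^2 / (real n - 1) = 4 * ln (real n) * (real n / (real n - 1))"
          by (simp add: field_simps)
        have "1 \<le> real n / (real n - 1)" using n by (simp add: field_simps)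
        then have "4 * ln (real n) * 1 \<le> 4 * ln (real n) * (real n / (real n - 1))"
          using ln0 by (intro mult_left_mono) auto
        then have "4 * ln (real n) \<le> 2 * (sn n)^2 / (real n - 1)" unfolding e by simp
        then have "exp (- (2 * (sn n)^2 / (real n - 1))) \<le> 1 / real n ^ 4" using n by (intro exp4) auto
        then show ?thesis by simp
      qed
      finally show ?thesis by simp
    qed
    have Pb: "measure M (Pset n ij) \<le> 2 / real n ^ 4" if ij: "ij \<in> Pairs n" for ij
    proof -
      obtain i j where ij0: "ij = (i, j)" by (cases ij)
      then have ij': "ij = (i, j)" "i < n" "j < n" "i \<noteq> j" using ij by (auto simp: Pairs_def)
      have mpos: "T n * real n > 0" using TP n by simp
      have tn0: "tn n \<ge> 0" unfolding tn_def using sn0 mpos by simp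
      have "measure M (Pset n ij) \<le> 2 * exp (-2 * (tn n)^2 * (T n * real n)^2 / real n)"
        unfolding Pset_def ij'(1) fst_conv snd_conv
        by (rule prod_hoeff) (use n ij' mpos TP tn0 in auto)
      also have "-2 * (tn n)^2 * (T n * real n)^2 / real n = - (4 * ln (real n))"
      proof -
        have mne: "(T n * real n)^2 \<noteq> 0" by (rule power_not_zero) (use mpos in linarith)
        have "(tn n)^2 * (T n * real n)^2 = (sn n)^2" unfolding tn_def power_divide using mne by simp
        also have "(sn n)^2 = 2 * real n * ln (real n)" unfolding sn_def using ln0 by simp
        finally have e: "(tn n)^2 * (T n * real n)^2 = 2 * real n * ln (real n)" .
        have "-2 * (tn n)^2 * (T n * real n)^2 / real n = -2 * ((tn n)^2 * (T n * real n)^2) / real n"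
          by (simp add: mult.assoc)
        also have "\<dots> = - (4 * ln (real n))" unfolding e using n by simp
        finally show ?thesis .
      qed
      also have "exp (- (4 * ln (real n))) \<le> 1 / real n ^ 4" using n by (intro exp4) auto
      finally show ?thesis by simp
    qed
    have "measure M (A n) \<le> measure M (\<Union>i\<in>{..<n}. Dset n i) + measure M (\<Union>ij\<in>Pairs n. Pset n ij)"
      unfolding A_def using nN Dsets Psets finP by (simp add: measure_Un_le sets.finite_UN)
    also have "\<dots> \<le> (\<Sum>i\<in>{..<n}. measure M (Dset n i)) + (\<Sum>ij\<in>Pairs n. measure M (Pset n ij))"
      using Dsets Psets finP by (intro add_mono measure_UNION_le) auto
    also have "\<dots> \<le> (\<Sum>i\<in>{..<n}. 2 / real n ^ 4) + (\<Sum>ij\<in>Pairs n. 2 / real n ^ 4)"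
      using D Pb by (intro add_mono sum_mono) auto
    also have "\<dots> = real n * (2 / real n ^ 4) + real (card (Pairs n)) * (2 / real n ^ 4)" by simp
    also have "\<dots> \<le> real n * real n * (2 / real n ^ 4) + real n * real n * (2 / real n ^ 4)"
    proof (intro add_mono mult_right_mono)
      show "real n \<le> real n * real n" using n by simp
      show "real (card (Pairs n)) \<le> real n * real n" using cardP[of n] by (simp flip: of_nat_mult)
    qed auto
    also have "\<dots> = 4 / real n ^ 2" using n by (simp add: field_simps power2_eq_square power4_eq_xxxx)
    finally show ?thesis .
  qed
  have summ: "summable (\<lambda>n. measure M (A n))"
  proof (rule summable_comparison_test')
    show "summable (\<lambda>n. 4 * inverse (real n ^ 2))"
      by (intro summable_mult inverse_power_summable) auto
    show "norm (measure M (A n)) \<le> 4 * inverse (real n ^ 2)" if "n \<ge> N0" for n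
      using Abound[OF that] by (simp add: divide_inverse)
  qed
  have ae: "AE \<omega> in M. eventually (\<lambda>n. \<omega> \<in> space M - A n) sequentially"
    by (rule borel_cantelli_AE1) (use Asets summ in \<open>auto simp: emeasure_eq_measure\<close>)
  have "AE \<omega> in M. \<omega> \<in> space M \<and> eventually (\<lambda>n. \<omega> \<in> space M - A n) sequentially"
    using ae AE_space by eventually_elim auto
  then show ?thesis
  proof (rule eventually_mono)
    fix \<omega> assume w: "\<omega> \<in> space M \<and> eventually (\<lambda>n. \<omega> \<in> space M - A n) sequentially"
    show "(\<lambda>n. frob_norm n (\<lambda>i j.
                  mat_mult_n n (norm_laplacian n (W n \<omega>)) (norm_laplacian n (W n \<omega>)) i j
                - mat_mult_n n (norm_laplacian n (P n)) (norm_laplacian n (P n)) i j))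
         \<in> o(\<lambda>n. ln (real n) / ((tau n (P n))\<^sup>2 * sqrt (real n)))"
      unfolding T_def[symmetric]
    proof (rule asym)
      have evN: "eventually (\<lambda>n. n \<ge> N0) sequentially" by (rule eventually_ge_at_top)
      have wsp: "\<omega> \<in> space M" using w by simp
      have ev: "eventually (\<lambda>n. \<omega> \<in> space M - A n) sequentially" using w by (rule conjunct2)
      from ev ev_ln evN show "eventually (\<lambda>n. T n > 0 \<and> \<bar>frob_norm n (\<lambda>i j.
                  mat_mult_n n (norm_laplacian n (W n \<omega>)) (norm_laplacian n (W n \<omega>)) i j
                - mat_mult_n n (norm_laplacian n (P n)) (norm_laplacian n (P n)) i j)\<bar>
           \<le> (2 + 9 * sqrt (2 * ln (real n))) / ((T n)^2 * sqrt (real n))) sequentially"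
      proof eventually_elim
        case (elim n)
        have nN: "n \<ge> N0" using elim by simp
        have n: "n \<ge> 4" using nN by (auto simp: N0_def)
        note TP = Tprops[OF nN]
        have ln0: "ln (real n) \<ge> 0" using n by simp
        have notA: "\<omega> \<notin> A n" using elim by simp
        define m where "m = T n * real n"
        have mpos: "m > 0" unfolding m_def using TP n by simp
        have sm: "sn n \<le> m / 2" unfolding sn_def m_def
          using s_le[of n "T n"] n TP elim by auto
        have sn0: "sn n \<ge> 0" unfolding sn_def using ln0 by simp
        have H1: "\<bar>degree_mat n (W n \<omega>) i - degree_mat n (P n) i\<bar> \<le> sn n" if "i < n" for i
          using notA nN wsp that unfolding A_def Dset_def by force
        have H2: "\<bar>(\<Sum>k<n. W n \<omega> i k * W n \<omega> k j / degree_mat n (P n) k)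
                 - (\<Sum>k<n. P n i k * P n k j / degree_mat n (P n) k)\<bar> \<le> tn n"
          if "i < n" "j < n" "i \<noteq> j" for i j
        proof -
          have "(i, j) \<in> Pairs n" using that by (simp add: Pairs_def)
          then have "\<omega> \<notin> Pset n (i, j)" using notA nN unfolding A_def by auto
          then show ?thesis using wsp unfolding Pset_def by auto
        qed
        have fb: "frob_norm n (\<lambda>i j.
                  mat_mult_n n (norm_laplacian n (W n \<omega>)) (norm_laplacian n (W n \<omega>)) i j
                - mat_mult_n n (norm_laplacian n (P n)) (norm_laplacian n (P n)) i j)
              \<le> 2 * sqrt n / m + n * (7 * sn n / m^2 + 2 * tn n / m)"
        proof (rule det_bound)
          show "\<And>i j. i < n \<Longrightarrow> j < n \<Longrightarrow> 0 \<le> W n \<omega> i j \<and> W n \<omega> i j \<le> 1" using W_bound wsp by blast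
          show "\<And>i j. i < n \<Longrightarrow> j < n \<Longrightarrow> W n \<omega> i j = W n \<omega> j i" using W_sym wsp by blast
          show "\<And>i j. i < n \<Longrightarrow> j < n \<Longrightarrow> 0 \<le> P n i j \<and> P n i j \<le> 1" using P_range by blast
          show "\<And>i j. i < n \<Longrightarrow> j < n \<Longrightarrow> P n i j = P n j i" using P_sym by blast
          show "0 < m" by (rule mpos)
          show "\<And>k. k < n \<Longrightarrow> m \<le> degree_mat n (P n) k" using TP unfolding m_def by blast
          show "0 \<le> sn n" by (rule sn0)
          show "sn n \<le> m / 2" by (rule sm)
          show "0 \<le> tn n" unfolding tn_def m_def[symmetric] using sn0 mpos by simp
          show "\<And>i. i < n \<Longrightarrow> \<bar>degree_mat n (W n \<omega>) i - degree_mat n (P n) i\<bar> \<le> sn n" by (rule H1)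
          show "\<And>i j. i < n \<Longrightarrow> j < n \<Longrightarrow> i \<noteq> j \<Longrightarrow> \<bar>(\<Sum>k<n. W n \<omega> i k * W n \<omega> k j / degree_mat n (P n) k)
                 - (\<Sum>k<n. P n i k * P n k j / degree_mat n (P n) k)\<bar> \<le> tn n" by (rule H2)
        qed
        also have "\<dots> \<le> (2 + 9 * sqrt (2 * ln (real n))) / ((T n)^2 * sqrt (real n))"
          using B_bound[of "T n" n] TP n unfolding m_def tn_def sn_def by auto
        finally have fb': "frob_norm n (\<lambda>i j.
                  mat_mult_n n (norm_laplacian n (W n \<omega>)) (norm_laplacian n (W n \<omega>)) i j
                - mat_mult_n n (norm_laplacian n (P n)) (norm_laplacian n (P n)) i j)
              \<le> (2 + 9 * sqrt (2 * ln (real n))) / ((T n)^2 * sqrt (real n))" .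
        have "frob_norm n (\<lambda>i j.
                  mat_mult_n n (norm_laplacian n (W n \<omega>)) (norm_laplacian n (W n \<omega>)) i j
                - mat_mult_n n (norm_laplacian n (P n)) (norm_laplacian n (P n)) i j) \<ge> 0"
          unfolding frob_norm_def by (intro real_sqrt_ge_zero sum_nonneg) auto
        then show ?case using fb' TP by simp
      qed
    qed
  qed
qed

theorem theorem2p1:
  fixes M :: "'a measure"
    and W :: "nat \<Rightarrow> 'a \<Rightarrow> nat \<Rightarrow> nat \<Rightarrow> real"
    and P :: "nat \<Rightarrow> nat \<Rightarrow> nat \<Rightarrow> real"
  assumes "prob_space M"
    and P_range: "\<And>n i j. i < n \<Longrightarrow> j < n \<Longrightarrow> 0 \<le> P n i j \<and> P n i j \<le> 1"
    and P_sym: "\<And>n i j. i < n \<Longrightarrow> j < n \<Longrightarrow> P n i j = P n j i"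
    and P_diag: "\<And>n i. i < n \<Longrightarrow> P n i i = 0"
    and W_01: "\<And>n i j \<omega>. \<omega> \<in> space M \<Longrightarrow> i < n \<Longrightarrow> j < n \<Longrightarrow> W n \<omega> i j \<in> {0, 1}"
    and W_sym: "\<And>n i j \<omega>. \<omega> \<in> space M \<Longrightarrow> i < n \<Longrightarrow> j < n \<Longrightarrow> W n \<omega> i j = W n \<omega> j i"
    and W_diag: "\<And>n i \<omega>. \<omega> \<in> space M \<Longrightarrow> i < n \<Longrightarrow> W n \<omega> i i = 0"
    and W_indep: "\<And>n. prob_space.indep_vars M (\<lambda>_. borel) (\<lambda>(i, j) \<omega>. W n \<omega> i j)
                          {(i, j). i < j \<and> j < n}"
    and W_mean: "\<And>n i j. i < j \<Longrightarrow> j < n \<Longrightarrow>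
                   prob_space.expectation M (\<lambda>\<omega>. W n \<omega> i j) = P n i j"
    and tau_cond: "\<exists>N>0. \<forall>n>N. (tau n (P n))\<^sup>2 * ln (real n) > 2"
  shows "AE \<omega> in M.
           (\<lambda>n. frob_norm n (\<lambda>i j.
                  mat_mult_n n (norm_laplacian n (W n \<omega>)) (norm_laplacian n (W n \<omega>)) i j
                - mat_mult_n n (norm_laplacian n (P n)) (norm_laplacian n (P n)) i j))
         \<in> o(\<lambda>n. ln (real n) / ((tau n (P n))\<^sup>2 * sqrt (real n)))"
proof -
  interpret L: lsm M W P
    by (intro lsm.intro lsm_axioms.intro) (fact assms)+
  show ?thesis by (rule L.main[OF tau_cond])
qed

end
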